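(* A category $C$ is Möbius if and only if the following three conditions hold: (1) $\mathrm{PD}_2f$ is finite for every morphism $f$; (2) no identity morphism admits a proper decomposition of length $n\ge2$; (3) if a morphism $f$ fixes some morphism $g$ (i.e. $fg=g$ or $gf=g$), then $f$ is an identity morphism.
   Context: For a morphism $f$ and $n\ge1$, an $n$-decomposition of $f$ is a tuple $(f_1,\dots,f_n)$ of composable morphisms with $f_n\cdots f_1=f$; $\mathrm{D}_nf$ is the set of them. For $n\ge2$, $\mathrm{PD}_nf$ is the set of proper $n$-decompositions (none of the $f_i$ is an identity); $\mathrm{PD}_1f=\{f\}$ and $\mathrm{PD}f=\bigsqcup_{n\ge1}\mathrm{PD}_nf$. A category is Möbius if $\mathrm{PD}f$ is finite for every morphism $f$. *)

theory Defs
  imports Main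
begin

text \<open>A (possibly large) category, given by objects, morphisms, domain, codomain,
identities and composition. \<open>Comp C g f\<close> is the composite g after f (written gf).\<close>

record ('o, 'm) category_data =
  Ob   :: "'o set"
  Mor  :: "'m set"
  Dom  :: "'m \<Rightarrow> 'o"
  Cod  :: "'m \<Rightarrow> 'o"
  Id   :: "'o \<Rightarrow> 'm"
  Comp :: "'m \<Rightarrow> 'm \<Rightarrow> 'm"

definition category :: "('o, 'm) category_data \<Rightarrow> bool" where
  "category C \<longleftrightarrow>
     (\<forall>f\<in>Mor C. Dom C f \<in> Ob C \<and> Cod C f \<in> Ob C) \<and>
     (\<forall>a\<in>Ob C. Id C a \<in> Mor C \<and> Dom C (Id C a) = a \<and> Cod C (Id C a) = a) \<and>
     (\<forall>f\<in>Mor C. \<forall>g\<in>Mor C. Cod C f = Dom C g \<longrightarrow>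
         Comp C g f \<in> Mor C \<and> Dom C (Comp C g f) = Dom C f \<and> Cod C (Comp C g f) = Cod C g) \<and>
     (\<forall>f\<in>Mor C. Comp C (Id C (Cod C f)) f = f \<and> Comp C f (Id C (Dom C f)) = f) \<and>
     (\<forall>f\<in>Mor C. \<forall>g\<in>Mor C. \<forall>h\<in>Mor C. Cod C f = Dom C g \<longrightarrow> Cod C g = Dom C h \<longrightarrow>
         Comp C h (Comp C g f) = Comp C (Comp C h g) f)"

definition is_identity :: "('o, 'm) category_data \<Rightarrow> 'm \<Rightarrow> bool" where
  "is_identity C g \<longleftrightarrow> (\<exists>a\<in>Ob C. g = Id C a)"

text \<open>A tuple \<open>(f\<^sub>1,\<dots>,f\<^sub>n)\<close> is represented by the list \<open>[f\<^sub>1,\<dots>,f\<^sub>n]\<close>;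
  \<open>comp_list C [f\<^sub>1,\<dots>,f\<^sub>n] = f\<^sub>n \<cdots> f\<^sub>1\<close>.\<close>

fun comp_list :: "('o, 'm) category_data \<Rightarrow> 'm list \<Rightarrow> 'm" where
  "comp_list C [] = undefined"
| "comp_list C [f] = f"
| "comp_list C (f # fs) = Comp C (comp_list C fs) f"

definition composable :: "('o, 'm) category_data \<Rightarrow> 'm list \<Rightarrow> bool" where
  "composable C fs \<longleftrightarrow> set fs \<subseteq> Mor C \<and>
     (\<forall>i. Suc i < length fs \<longrightarrow> Cod C (fs ! i) = Dom C (fs ! Suc i))"

definition D :: "('o, 'm) category_data \<Rightarrow> nat \<Rightarrow> 'm \<Rightarrow> 'm list set" where
  "D C n f = {fs. n \<ge> 1 \<and> length fs = n \<and> composable C fs \<and> comp_list C fs = f}"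

definition PD :: "('o, 'm) category_data \<Rightarrow> nat \<Rightarrow> 'm \<Rightarrow> 'm list set" where
  "PD C n f = (if n = 1 then {[f]}
               else {fs \<in> D C n f. n \<ge> 2 \<and> (\<forall>g\<in>set fs. \<not> is_identity C g)})"

definition PD_all :: "('o, 'm) category_data \<Rightarrow> 'm \<Rightarrow> 'm list set" where
  "PD_all C f = (\<Union>n\<in>{1..}. PD C n f)"

definition moebius :: "('o, 'm) category_data \<Rightarrow> bool" where
  "moebius C \<longleftrightarrow> (\<forall>f\<in>Mor C. finite (PD_all C f))"

end

theory Submission
  imports Defs
begin

lemma cat_comp:
  assumes "category C" "f \<in> Mor C" "g \<in> Mor C" "Cod C f = Dom C g"
  shows "Comp C g f \<in> Mor C \<and> Dom C (Comp C g f) = Dom C f \<and> Cod C (Comp C g f) = Cod C g"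
  using assms unfolding category_def by blast

lemma cat_assoc:
  assumes "category C" "f \<in> Mor C" "g \<in> Mor C" "h \<in> Mor C" "Cod C f = Dom C g" "Cod C g = Dom C h"
  shows "Comp C h (Comp C g f) = Comp C (Comp C h g) f"
  using assms unfolding category_def by blast

lemma cat_idl: "category C \<Longrightarrow> f \<in> Mor C \<Longrightarrow> Comp C (Id C (Cod C f)) f = f"
  unfolding category_def by blast
lemma cat_idr: "category C \<Longrightarrow> f \<in> Mor C \<Longrightarrow> Comp C f (Id C (Dom C f)) = f"
  unfolding category_def by blast
lemma cat_id: "category C \<Longrightarrow> a \<in> Ob C \<Longrightarrow> Id C a \<in> Mor C \<and> Dom C (Id C a) = a \<and> Cod C (Id C a) = a"
  unfolding category_def by blast

lemma comp_Cons: "xs \<noteq> [] \<Longrightarrow> comp_list C (f#xs) = Comp C (comp_list C xs) f"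
  by (cases xs) auto

lemma composable_Nil[simp]: "composable C []"
  by (simp add: composable_def)
lemma composable_single[simp]: "composable C [f] \<longleftrightarrow> f \<in> Mor C"
  by (simp add: composable_def)
lemma composable_Cons2[simp]:
  "composable C (f#g#fs) \<longleftrightarrow> f \<in> Mor C \<and> Cod C f = Dom C g \<and> composable C (g#fs)"
  apply (auto simp: composable_def)
  apply (case_tac i; auto)
  done

lemma comp_props:
  assumes "category C"
  shows "composable C xs \<Longrightarrow> xs \<noteq> [] \<Longrightarrow> comp_list C xs \<in> Mor C \<and>
     Dom C (comp_list C xs) = Dom C (hd xs) \<and> Cod C (comp_list C xs) = Cod C (last xs)"
proof (induction xs rule: induct_list012)
  case (3 x y zs)
  then show ?case using cat_comp[OF assms, of x "comp_list C (y#zs)"] by auto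
qed auto

lemma composable_append:
  "composable C (xs@ys) \<longleftrightarrow> composable C xs \<and> composable C ys \<and>
     (xs \<noteq> [] \<longrightarrow> ys \<noteq> [] \<longrightarrow> Cod C (last xs) = Dom C (hd ys))"
proof (induction xs rule: induct_list012)
  case (2 x)
  then show ?case by (cases ys) auto
qed auto

lemma comp_append:
  assumes "category C"
  shows "composable C (xs@ys) \<Longrightarrow> xs \<noteq> [] \<Longrightarrow> ys \<noteq> [] \<Longrightarrow>
    comp_list C (xs@ys) = Comp C (comp_list C ys) (comp_list C xs)"
proof (induction xs rule: induct_list012)
  case (2 x)
  then show ?case by (simp add: comp_Cons)
next
  case (3 x y zs)
  have c: "composable C (y#zs)" "composable C ys" "x \<in> Mor C" "Cod C x = Dom C y"
    "Cod C (last (y#zs)) = Dom C (hd ys)"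
    using "3.prems" composable_append[of C "x#y#zs" ys] by auto
  have p1: "comp_list C (y#zs) \<in> Mor C" "Dom C (comp_list C (y#zs)) = Dom C y"
     "Cod C (comp_list C (y#zs)) = Cod C (last (y#zs))"
    using comp_props[OF assms c(1)] by auto
  have p2: "comp_list C ys \<in> Mor C" "Dom C (comp_list C ys) = Dom C (hd ys)"
    using comp_props[OF assms c(2)] "3.prems" by auto
  have "comp_list C ((x#y#zs)@ys) = Comp C (comp_list C ((y#zs)@ys)) x" by simp
  also have "\<dots> = Comp C (Comp C (comp_list C ys) (comp_list C (y#zs))) x"
    using "3.IH"(2) "3.prems" composable_append[of C "x#y#zs" ys] by auto
  also have "\<dots> = Comp C (comp_list C ys) (Comp C (comp_list C (y#zs)) x)"
    using cat_assoc[OF assms c(3) p1(1) p2(1)] c p1 p2 by simp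
  also have "\<dots> = Comp C (comp_list C ys) (comp_list C (x#y#zs))" by simp
  finally show ?case .
qed simp

lemma in_PD: "n \<ge> 2 \<Longrightarrow> fs \<in> PD C n f \<longleftrightarrow> length fs = n \<and> composable C fs \<and>
   comp_list C fs = f \<and> (\<forall>g\<in>set fs. \<not> is_identity C g)"
  by (auto simp: PD_def D_def)

lemma PD_sub: "n \<ge> 1 \<Longrightarrow> PD C n f \<subseteq> PD_all C f"
  by (auto simp: PD_all_def)

lemma NI:
  assumes cat: "category C"
    and h2: "\<forall>a\<in>Ob C. \<forall>n\<ge>2. PD C n (Id C a) = {}"
    and xs: "composable C xs" "xs \<noteq> []" "\<forall>g\<in>set xs. \<not> is_identity C g"
  shows "\<not> is_identity C (comp_list C xs)"
proof
  assume idc: "is_identity C (comp_list C xs)"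
  show False
  proof (cases "length xs = 1")
    case True
    then obtain x where "xs = [x]" by (cases xs) auto
    then show False using idc xs by auto
  next
    case False
    with xs have n2: "length xs \<ge> 2" by (cases xs; auto simp: Suc_le_eq)
    from idc obtain a where a: "a \<in> Ob C" "comp_list C xs = Id C a" by (auto simp: is_identity_def)
    have "xs \<in> PD C (length xs) (Id C a)" using n2 xs a by (simp add: in_PD)
    then show False using h2 a n2 by blast
  qed
qed

lemma PD_bound:
  assumes cat: "category C"
    and h1: "\<forall>f\<in>Mor C. finite (PD C 2 f)"
    and h2: "\<forall>a\<in>Ob C. \<forall>n\<ge>2. PD C n (Id C a) = {}"
    and h3: "\<forall>f\<in>Mor C. \<forall>g\<in>Mor C.
        ((Cod C g = Dom C f \<and> Comp C f g = g) \<or> (Cod C f = Dom C g \<and> Comp C g f = g))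
        \<longrightarrow> is_identity C f"
    and n: "n \<ge> 2" and fs: "fs \<in> PD C n f"
  shows "n - 1 \<le> card (PD C 2 f)"
proof -
  have fs': "length fs = n" "composable C fs" "comp_list C fs = f" "\<forall>g\<in>set fs. \<not> is_identity C g"
    using fs n by (auto simp: in_PD)
  have "fs \<noteq> []" using fs'(1) n by auto
  then have fM: "f \<in> Mor C" using comp_props[OF cat fs'(2)] fs'(3) by auto
  define p where "p k = [comp_list C (take k fs), comp_list C (drop k fs)]" for k
  have tk: "composable C (take k fs)" "composable C (drop k fs)"
    "take k fs \<noteq> [] \<longrightarrow> drop k fs \<noteq> [] \<longrightarrow> Cod C (last (take k fs)) = Dom C (hd (drop k fs))" for k
    using composable_append[of C "take k fs" "drop k fs"] fs'(2) by auto
  have nid: "\<forall>g\<in>set (take k fs). \<not> is_identity C g" "\<forall>g\<in>set (drop k fs). \<not> is_identity C g" for k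
    using fs'(4) by (meson in_set_takeD in_set_dropD)+
  have pin: "p k \<in> PD C 2 f" if k: "k \<in> {1..<n}" for k
  proof -
    have ne: "take k fs \<noteq> []" "drop k fs \<noteq> []" using k fs'(1) by auto
    have A: "comp_list C (take k fs) \<in> Mor C" "Cod C (comp_list C (take k fs)) = Cod C (last (take k fs))"
      using comp_props[OF cat tk(1) ne(1)] by auto
    have B: "comp_list C (drop k fs) \<in> Mor C" "Dom C (comp_list C (drop k fs)) = Dom C (hd (drop k fs))"
      using comp_props[OF cat tk(2) ne(2)] by auto
    have "comp_list C (p k) = comp_list C fs"
      using comp_append[OF cat, of "take k fs" "drop k fs"] fs'(2) ne by (simp add: p_def)
    moreover have "composable C (p k)" using A B tk(3)[of k] ne by (simp add: p_def)
    moreover have "\<forall>g\<in>set (p k). \<not> is_identity C g"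
      using NI[OF cat h2 tk(1) ne(1) nid(1)] NI[OF cat h2 tk(2) ne(2) nid(2)] by (simp add: p_def)
    ultimately show ?thesis using fs'(3) by (simp add: in_PD p_def)
  qed
  have noteq: "p i \<noteq> p j" if ij: "i < j" "i \<in> {1..<n}" "j \<in> {1..<n}" for i j
  proof
    assume eq: "p i = p j"
    define u where "u = take (j - i) (drop i fs)"
    have tj: "take j fs = take i fs @ u" using take_add[of i "j-i" fs] ij by (simp add: u_def)
    have une: "u \<noteq> []" "take i fs \<noteq> []" using ij fs'(1) by (auto simp: u_def)
    have cu: "composable C (take i fs @ u)" using tk(1)[of j] tj by simp
    have cu2: "composable C u" "Cod C (last (take i fs)) = Dom C (hd u)"
      using cu composable_append[of C "take i fs" u] une by auto
    have uid: "\<forall>g\<in>set u. \<not> is_identity C g" using nid(2)[of i] by (auto simp: u_def dest: in_set_takeD)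
    have U: "comp_list C u \<in> Mor C" "Dom C (comp_list C u) = Dom C (hd u)"
      using comp_props[OF cat cu2(1) une(1)] by auto
    have G: "comp_list C (take i fs) \<in> Mor C" "Cod C (comp_list C (take i fs)) = Cod C (last (take i fs))"
      using comp_props[OF cat tk(1) une(2)] by auto
    have "comp_list C (take j fs) = Comp C (comp_list C u) (comp_list C (take i fs))"
      using comp_append[OF cat cu une(2) une(1)] tj by simp
    moreover have "comp_list C (take j fs) = comp_list C (take i fs)" using eq by (simp add: p_def)
    ultimately have "is_identity C (comp_list C u)"
      using h3 U G cu2(2) by metis
    then show False using NI[OF cat h2 cu2(1) une(1) uid] by simp
  qed
  have "inj_on p {1..<n}"
    unfolding inj_on_def by (metis noteq linorder_neqE_nat)
  then have "card {1..<n} \<le> card (PD C 2 f)"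
    using card_inj_on_le[of p "{1..<n}" "PD C 2 f"] pin h1 fM by blast
  then show ?thesis by simp
qed

lemma PD_finite:
  assumes cat: "category C"
    and h1: "\<forall>f\<in>Mor C. finite (PD C 2 f)"
    and h2: "\<forall>a\<in>Ob C. \<forall>n\<ge>2. PD C n (Id C a) = {}"
  shows "n \<ge> 1 \<Longrightarrow> \<forall>f\<in>Mor C. finite (PD C n f)"
proof (induction n)
  case 0 then show ?case by simp
next
  case (Suc m)
  show ?case
  proof (cases "m \<le> 1")
    case True
    then have "m = 0 \<or> m = 1" by auto
    then show ?thesis using h1 by (auto simp: numeral_2_eq_2 PD_def)
  next
    case False
    then have m2: "m \<ge> 2" by simp
    have IH: "\<forall>f\<in>Mor C. finite (PD C m f)" using Suc.IH m2 by simp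
    show ?thesis
    proof
      fix f assume fM: "f \<in> Mor C"
      have sub: "PD C (Suc m) f \<subseteq> (\<lambda>(l, r). hd l # r) ` (SIGMA l:PD C 2 f. PD C m (l!1))"
      proof
        fix fs assume fs: "fs \<in> PD C (Suc m) f"
        then have fs': "length fs = Suc m" "composable C fs" "comp_list C fs = f" "\<forall>g\<in>set fs. \<not> is_identity C g"
          using m2 by (auto simp: in_PD)
        then obtain x rest where xr: "fs = x # rest" by (cases fs) auto
        have rl: "length rest = m" "rest \<noteq> []" using fs'(1) xr m2 by auto
        have cr: "composable C rest" "x \<in> Mor C" "Cod C x = Dom C (hd rest)"
          using fs'(2) xr rl composable_append[of C "[x]" rest] by auto
        have R: "comp_list C rest \<in> Mor C" "Dom C (comp_list C rest) = Dom C (hd rest)"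
          using comp_props[OF cat cr(1) rl(2)] by auto
        have nr: "\<not> is_identity C (comp_list C rest)"
          using NI[OF cat h2 cr(1) rl(2)] fs'(4) xr by simp
        have "[x, comp_list C rest] \<in> PD C 2 f"
          using cr R nr fs' xr rl by (simp add: in_PD comp_Cons)
        moreover have "rest \<in> PD C m (comp_list C rest)"
          using rl cr fs'(4) xr m2 by (simp add: in_PD)
        ultimately show "fs \<in> (\<lambda>(l, r). hd l # r) ` (SIGMA l:PD C 2 f. PD C m (l!1))"
          using xr by (intro image_eqI[of _ _ "([x, comp_list C rest], rest)"]) auto
      qed
      have "\<forall>l\<in>PD C 2 f. l!1 \<in> Mor C"
        by (auto simp: in_PD composable_def) (metis One_nat_def lessI nth_mem numeral_2_eq_2 subsetD)
      then have "finite (SIGMA l:PD C 2 f. PD C m (l!1))"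
        using h1 fM IH by (intro finite_SigmaI) auto
      then show "finite (PD C (Suc m) f)" using sub finite_subset by blast
    qed
  qed
qed

theorem theorem7p1:
  fixes C :: "('o, 'm) category_data"
  assumes "category C"
  shows "moebius C \<longleftrightarrow>
    ((\<forall>f\<in>Mor C. finite (PD C 2 f)) \<and>
     (\<forall>a\<in>Ob C. \<forall>n\<ge>2. PD C n (Id C a) = {}) \<and>
     (\<forall>f\<in>Mor C. \<forall>g\<in>Mor C.
        ((Cod C g = Dom C f \<and> Comp C f g = g) \<or> (Cod C f = Dom C g \<and> Comp C g f = g))
        \<longrightarrow> is_identity C f))"
proof
  note cat = assms
  assume mo: "moebius C"
  have fin: "finite (PD_all C f)" if "f \<in> Mor C" for f using mo that by (simp add: moebius_def)
  have c1: "\<forall>f\<in>Mor C. finite (PD C 2 f)"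
    using fin PD_sub[of 2 C] finite_subset by fastforce
  have c2: "\<forall>a\<in>Ob C. \<forall>n\<ge>2. PD C n (Id C a) = {}"
  proof (intro ballI allI impI)
    fix a n assume a: "a \<in> Ob C" and n: "(n::nat) \<ge> 2"
    show "PD C n (Id C a) = {}"
    proof (rule ccontr)
      assume "PD C n (Id C a) \<noteq> {}"
      then obtain fs where fs: "fs \<in> PD C n (Id C a)" by blast
      then have fs': "length fs = n" "composable C fs" "comp_list C fs = Id C a" "\<forall>g\<in>set fs. \<not> is_identity C g"
        using n by (auto simp: in_PD)
      have ne: "fs \<noteq> []" using fs'(1) n by auto
      have ia: "Id C a \<in> Mor C" "Dom C (Id C a) = a" "Cod C (Id C a) = a" using cat_id[OF cat a] by auto
      have ends: "Cod C (last fs) = a" "Dom C (hd fs) = a"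
        using comp_props[OF cat fs'(2) ne] fs'(3) ia by auto
      define F where "F k = concat (replicate (Suc k) fs)" for k
      have FP: "F k \<in> PD C (Suc k * n) (Id C a) \<and> F k \<noteq> [] \<and> hd (F k) = hd fs" for k
      proof (induction k)
        case 0 then show ?case using fs ne by (simp add: F_def)
      next
        case (Suc k)
        have eq: "F (Suc k) = fs @ F k" by (simp add: F_def)
        have Fk: "length (F k) = Suc k * n" "composable C (F k)" "comp_list C (F k) = Id C a"
          "\<forall>g\<in>set (F k). \<not> is_identity C g" "F k \<noteq> []" "hd (F k) = hd fs"
          using Suc.IH n by (auto simp: in_PD)
        have cc: "composable C (fs @ F k)"
          using composable_append[of C fs "F k"] fs'(2) Fk ends ne by simp
        have "comp_list C (fs @ F k) = Comp C (Id C a) (Id C a)"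
          using comp_append[OF cat cc ne Fk(5)] Fk fs' by simp
        also have "\<dots> = Id C a" using cat_idl[OF cat ia(1)] ia by simp
        finally have "comp_list C (F (Suc k)) = Id C a" using eq by simp
        moreover have "\<forall>g\<in>set (F (Suc k)). \<not> is_identity C g" using eq Fk fs' by auto
        ultimately show ?case using eq cc Fk fs' n ne by (simp add: in_PD)
      qed
      have "range F \<subseteq> PD_all C (Id C a)"
      proof (rule image_subsetI)
        fix k have "Suc k * n \<ge> 1" using n by simp
        then show "F k \<in> PD_all C (Id C a)" using FP[of k] PD_sub[of "Suc k * n" C "Id C a"] by blast
      qed
      moreover have "inj F"
      proof (rule injI)
        fix x y assume "F x = F y"
        then have "length (F x) = length (F y)" by simp
        then have "Suc x * n = Suc y * n" using fs'(1) by (simp add: F_def length_concat sum_list_replicate)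
        then show "x = y" using n by simp
      qed
      ultimately show False using fin[OF ia(1)] finite_imageD infinite_UNIV_nat finite_subset by blast
    qed
  qed
  have c3: "\<forall>f\<in>Mor C. \<forall>g\<in>Mor C.
        ((Cod C g = Dom C f \<and> Comp C f g = g) \<or> (Cod C f = Dom C g \<and> Comp C g f = g))
        \<longrightarrow> is_identity C f"
  proof (intro ballI impI)
    fix f g assume fM: "f \<in> Mor C" and gM: "g \<in> Mor C"
      and hyp: "(Cod C g = Dom C f \<and> Comp C f g = g) \<or> (Cod C f = Dom C g \<and> Comp C g f = g)"
    show "is_identity C f"
    proof (rule ccontr)
      assume nf: "\<not> is_identity C f"
      from hyp show False
      proof
        assume h: "Cod C g = Dom C f \<and> Comp C f g = g"
        have ng: "\<not> is_identity C g"
        proof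
          assume "is_identity C g"
          then obtain b where b: "b \<in> Ob C" "g = Id C b" by (auto simp: is_identity_def)
          then have "Dom C f = b" using h cat_id[OF cat b(1)] by simp
          then have "f = g" using h b cat_idr[OF cat fM] by simp
          then show False using nf b by (auto simp: is_identity_def)
        qed
        have cf: "Cod C f = Dom C f" using cat_comp[OF cat gM fM] h by metis
        define G where "G k = g # replicate (Suc k) f" for k
        have GP: "G k \<in> PD C (Suc (Suc k)) g" for k
        proof (induction k)
          case 0 then show ?case using fM gM h nf ng by (simp add: G_def in_PD)
        next
          case (Suc k)
          have eq: "G (Suc k) = G k @ [f]" by (simp add: G_def replicate_append_same)
          have Gk: "composable C (G k)" "comp_list C (G k) = g" "G k \<noteq> []" "last (G k) = f"
            using Suc.IH by (auto simp: in_PD G_def)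
          have cc: "composable C (G k @ [f])"
            using composable_append[of C "G k" "[f]"] Gk fM cf by simp
          have "comp_list C (G k @ [f]) = g" using comp_append[OF cat cc Gk(3)] Gk h by simp
          moreover have "length (G (Suc k)) = Suc (Suc (Suc k))" by (simp add: G_def)
          moreover have "\<forall>x\<in>set (G (Suc k)). \<not> is_identity C x" using nf ng by (simp add: G_def)
          ultimately show ?case using eq cc by (simp add: in_PD[of "Suc (Suc (Suc k))"])
        qed
        have "range G \<subseteq> PD_all C g" using GP PD_sub[of "Suc (Suc _)" C g] by (auto simp del: Suc_le_mono)
        moreover have "inj G" by (rule injI) (simp add: G_def)
        ultimately show False using fin[OF gM] finite_imageD infinite_UNIV_nat finite_subset by blast
      next
        assume h: "Cod C f = Dom C g \<and> Comp C g f = g"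
        have ng: "\<not> is_identity C g"
        proof
          assume "is_identity C g"
          then obtain b where b: "b \<in> Ob C" "g = Id C b" by (auto simp: is_identity_def)
          then have "Cod C f = b" using h cat_id[OF cat b(1)] by simp
          then have "f = g" using h b cat_idl[OF cat fM] by simp
          then show False using nf b by (auto simp: is_identity_def)
        qed
        have cf: "Cod C f = Dom C f" using cat_comp[OF cat fM gM] h by metis
        define G where "G k = replicate (Suc k) f @ [g]" for k
        have GP: "G k \<in> PD C (Suc (Suc k)) g \<and> hd (G k) = f" for k
        proof (induction k)
          case 0 then show ?case using fM gM h nf ng by (simp add: G_def in_PD)
        next
          case (Suc k)
          have eq: "G (Suc k) = [f] @ G k" by (simp add: G_def)
          have Gk: "composable C (G k)" "comp_list C (G k) = g" "G k \<noteq> []" "hd (G k) = f"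
            using Suc.IH by (auto simp: in_PD G_def)
          have cc: "composable C ([f] @ G k)"
            using composable_append[of C "[f]" "G k"] Gk fM cf by simp
          have "comp_list C ([f] @ G k) = g" using comp_append[OF cat cc _ Gk(3)] Gk h by simp
          moreover have "length (G (Suc k)) = Suc (Suc (Suc k))" by (simp add: G_def)
          moreover have "\<forall>x\<in>set (G (Suc k)). \<not> is_identity C x" using nf ng by (simp add: G_def)
          moreover have "hd (G (Suc k)) = f" by (simp add: G_def)
          ultimately show ?case using eq cc by (simp add: in_PD[of "Suc (Suc (Suc k))"])
        qed
        have "range G \<subseteq> PD_all C g" using GP PD_sub[of "Suc (Suc _)" C g] by (auto simp del: Suc_le_mono)
        moreover have "inj G" by (rule injI) (simp add: G_def)
        ultimately show False using fin[OF gM] finite_imageD infinite_UNIV_nat finite_subset by blast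
      qed
    qed
  qed
  show "(\<forall>f\<in>Mor C. finite (PD C 2 f)) \<and> (\<forall>a\<in>Ob C. \<forall>n\<ge>2. PD C n (Id C a) = {}) \<and>
     (\<forall>f\<in>Mor C. \<forall>g\<in>Mor C.
        ((Cod C g = Dom C f \<and> Comp C f g = g) \<or> (Cod C f = Dom C g \<and> Comp C g f = g))
        \<longrightarrow> is_identity C f)" using c1 c2 c3 by blast
next
  note cat = assms
  assume "(\<forall>f\<in>Mor C. finite (PD C 2 f)) \<and> (\<forall>a\<in>Ob C. \<forall>n\<ge>2. PD C n (Id C a) = {}) \<and>
     (\<forall>f\<in>Mor C. \<forall>g\<in>Mor C.
        ((Cod C g = Dom C f \<and> Comp C f g = g) \<or> (Cod C f = Dom C g \<and> Comp C g f = g))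
        \<longrightarrow> is_identity C f)"
  then have h1: "\<forall>f\<in>Mor C. finite (PD C 2 f)" and h2: "\<forall>a\<in>Ob C. \<forall>n\<ge>2. PD C n (Id C a) = {}"
    and h3: "\<forall>f\<in>Mor C. \<forall>g\<in>Mor C.
        ((Cod C g = Dom C f \<and> Comp C f g = g) \<or> (Cod C f = Dom C g \<and> Comp C g f = g))
        \<longrightarrow> is_identity C f" by blast+
  show "moebius C" unfolding moebius_def
  proof
    fix f assume fM: "f \<in> Mor C"
    define N where "N = card (PD C 2 f)"
    have "PD_all C f \<subseteq> (\<Union>n\<in>{1..N+1}. PD C n f)"
    proof
      fix fs assume "fs \<in> PD_all C f"
      then obtain n where n: "n \<ge> 1" "fs \<in> PD C n f" by (auto simp: PD_all_def)
      have "n \<le> N + 1"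
      proof (cases "n \<ge> 2")
        case True
        then show ?thesis using PD_bound[OF cat h1 h2 h3 True n(2)] by (simp add: N_def)
      qed simp
      then show "fs \<in> (\<Union>n\<in>{1..N+1}. PD C n f)" using n by auto
    qed
    moreover have "finite (\<Union>n\<in>{1..N+1}. PD C n f)"
      using PD_finite[OF cat h1 h2] fM by auto
    ultimately show "finite (PD_all C f)" using finite_subset by blast
  qed
qed

end
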